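(* Let $B',B''\subseteq\widetilde\Sigma^*\setminus\mathring\Sigma^+$ be bases in decomposed form, $B'$ with scaffold $sc'$ and fill $fl'$, $B''$ with scaffold $sc''$ and fill $fl''$. If $B'$ and $B''$ are joinable, then $\mathcal{C}(B')\cup\mathcal{C}(B'')=\mathcal{C}(B'\cup B'')$.
   Context: $\Sigma$ is a finite alphabet, $\mathring\Sigma=\{\mathring a\mid a\in\Sigma\}$ a disjoint ("dotted") copy, and $\widetilde\Sigma=\Sigma\cup\mathring\Sigma$. The match operation $@$ on letters is: $a@\mathring a=\mathring a@a=a$, $\mathring a@\mathring a=\mathring a$ for $a\in\Sigma$, undefined otherwise. For words $w,w'\in\widetilde\Sigma^n$, $w@w'=(w(1)@w'(1))\cdots(w(n)@w'(n))$ if every letterwise match is defined ($\epsilon@\epsilon=\epsilon$); otherwise (including unequal lengths) undefined. For languages, $B_1@B_2=\{w_1@w_2\mid w_1\in B_1,w_2\in B_2, w_1@w_2\text{ defined}\}$. Define $B^{0@}=B$, $B^{i@}=B^{(i-1)@}@B$, $B^@=\bigcup_{i\ge0}B^{i@}$, and $\mathcal{C}(B)=B^@\cap\Sigma^*$. $B$ is unproductive if $\mathcal{C}(B)=\emptyset$; $(B_1,B_2)$ is unmatchable if $B_1@B_2=\emptyset$. A base $B\subseteq\widetilde\Sigma^*\setminus\mathring\Sigma^+$ is in decomposed form with scaffold $sc$ and fill $fl$ if $B$ is the disjoint union of $sc$ and $fl$, $fl$ is unproductive and $(sc,sc)$ is unmatchable. Two decomposed bases $B',B''$ (scaffolds $sc',sc''$,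 fills $fl',fl''$) are joinable if $B'\cup B''$ is in decomposed form with scaffold $sc'\cup sc''$ and fill $fl'\cup fl''$, and the pairs $(sc',fl'')$ and $(sc'',fl')$ are unmatchable. *)

theory Defs
  imports Main
begin

datatype 'a tletter = Plain 'a | Dot 'a

fun lmatch :: "'a tletter \<Rightarrow> 'a tletter \<Rightarrow> 'a tletter option" where
  "lmatch (Plain a) (Dot b) = (if a = b then Some (Plain a) else None)"
| "lmatch (Dot a) (Plain b) = (if a = b then Some (Plain a) else None)"
| "lmatch (Dot a) (Dot b) = (if a = b then Some (Dot a) else None)"
| "lmatch (Plain a) (Plain b) = None"

fun wmatch :: "'a tletter list \<Rightarrow> 'a tletter list \<Rightarrow> 'a tletter list option" where
  "wmatch [] [] = Some []"
| "wmatch (x # xs) (y # ys) =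
     (case lmatch x y of None \<Rightarrow> None
      | Some z \<Rightarrow> (case wmatch xs ys of None \<Rightarrow> None | Some zs \<Rightarrow> Some (z # zs)))"
| "wmatch _ _ = None"

definition lang_match :: "'a tletter list set \<Rightarrow> 'a tletter list set \<Rightarrow> 'a tletter list set" where
  "lang_match B1 B2 = {w. \<exists>w1\<in>B1. \<exists>w2\<in>B2. wmatch w1 w2 = Some w}"

fun match_pow :: "'a tletter list set \<Rightarrow> nat \<Rightarrow> 'a tletter list set" where
  "match_pow B 0 = B"
| "match_pow B (Suc i) = lang_match (match_pow B i) B"

definition match_star :: "'a tletter list set \<Rightarrow> 'a tletter list set" where
  "match_star B = (\<Union>i. match_pow B i)"

definition plain_words :: "'a tletter list set" where
  "plain_words = {w. \<forall>x\<in>set w. \<exists>a. x = Plain a}"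

definition dotted_plus :: "'a tletter list set" where
  "dotted_plus = {w. w \<noteq> [] \<and> (\<forall>x\<in>set w. \<exists>a. x = Dot a)}"

definition compl :: "'a tletter list set \<Rightarrow> 'a tletter list set" ("\<C>") where
  "compl B = match_star B \<inter> plain_words"

definition unproductive :: "'a tletter list set \<Rightarrow> bool" where
  "unproductive B \<longleftrightarrow> compl B = {}"

definition unmatchable :: "'a tletter list set \<Rightarrow> 'a tletter list set \<Rightarrow> bool" where
  "unmatchable B1 B2 \<longleftrightarrow> lang_match B1 B2 = {}"

definition decomposed :: "'a tletter list set \<Rightarrow> 'a tletter list set \<Rightarrow> 'a tletter list set \<Rightarrow> bool" where
  "decomposed B sc fl \<longleftrightarrow>
     B \<inter> dotted_plus = {} \<and> B = sc \<union> fl \<and> sc \<inter> fl = {} \<and>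
     unproductive fl \<and> unmatchable sc sc"

definition joinable ::
  "'a tletter list set \<Rightarrow> 'a tletter list set \<Rightarrow> 'a tletter list set \<Rightarrow>
   'a tletter list set \<Rightarrow> 'a tletter list set \<Rightarrow> 'a tletter list set \<Rightarrow> bool" where
  "joinable B' sc' fl' B'' sc'' fl'' \<longleftrightarrow>
     decomposed (B' \<union> B'') (sc' \<union> sc'') (fl' \<union> fl'') \<and>
     unmatchable sc' fl'' \<and> unmatchable sc'' fl'"

end

theory Submission
  imports Defs
begin

definition lle :: "'a tletter \<Rightarrow> 'a tletter \<Rightarrow> bool" where
  "lle x y \<longleftrightarrow> x = y \<or> (\<exists>a. x = Dot a \<and> y = Plain a)"

definition leq :: "'a tletter list \<Rightarrow> 'a tletter list \<Rightarrow> bool" where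
  "leq s w \<longleftrightarrow> list_all2 lle s w"

lemma lmatch_comm: "lmatch x y = lmatch y x"
  by (cases x; cases y) auto

lemma wmatch_comm: "wmatch x y = wmatch y x"
  by (induction x y rule: wmatch.induct) (auto simp: lmatch_comm split: option.splits)

lemma lmatch_le: "lmatch x y = Some u \<Longrightarrow> lle x u \<and> lle y u"
  by (cases x; cases y) (auto simp: lle_def split: if_splits)

lemma wmatch_le: "wmatch x y = Some z \<Longrightarrow> leq x z \<and> leq y z"
proof (induction x y arbitrary: z rule: wmatch.induct)
  case (2 x xs y ys)
  then show ?case using lmatch_le
    by (auto simp: leq_def split: option.splits)
qed (auto simp: leq_def)

lemma lmatch_down: "lle s w \<Longrightarrow> lmatch w b = Some u \<Longrightarrow> \<exists>u'. lmatch s b = Some u'"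
  by (cases s; cases w; cases b) (auto simp: lle_def split: if_splits)

lemma wmatch_down: "leq s w \<Longrightarrow> wmatch w b = Some z \<Longrightarrow> \<exists>z'. wmatch s b = Some z'"
  unfolding leq_def
proof (induction s w arbitrary: b z rule: list_all2_induct)
  case Nil
  then show ?case by (cases b) auto
next
  case (Cons x xs y ys)
  then show ?case
  proof (cases b)
    case (Cons c cs)
    with Cons.prems obtain u zs where u: "lmatch y c = Some u" and zs: "wmatch ys cs = Some zs"
      by (auto split: option.splits)
    obtain u' where "lmatch x c = Some u'" using lmatch_down[OF Cons.hyps(1) u] by blast
    moreover obtain z' where "wmatch xs cs = Some z'" using Cons.IH[OF zs] by blast
    ultimately show ?thesis using Cons by auto
  qed auto
qed

lemma leq_refl: "leq w w"
  by (simp add: leq_def lle_def list_all2_refl)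

lemma leq_trans: "leq x y \<Longrightarrow> leq y z \<Longrightarrow> leq x z"
  unfolding leq_def
  by (rule list_all2_trans[of lle lle lle]) (auto simp: lle_def)

lemma match_pow_comp: "w \<in> match_pow X i \<Longrightarrow> \<exists>x\<in>X. leq x w"
proof (induction i arbitrary: w)
  case 0 then show ?case using leq_refl by auto
next
  case (Suc i)
  then obtain u b where "u \<in> match_pow X i" "b \<in> X" "wmatch u b = Some w"
    by (auto simp: lang_match_def)
  then show ?case using Suc.IH wmatch_le leq_trans by blast
qed

lemma match_pow_mono: "X \<subseteq> Y \<Longrightarrow> match_pow X i \<subseteq> match_pow Y i"
  by (induction i) (auto simp: lang_match_def)

lemma split_lemma: "w \<in> match_pow (X \<union> Y) i \<Longrightarrow> w \<in> match_pow X i \<or> (\<exists>y\<in>Y. leq y w)"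
proof (induction i arbitrary: w)
  case 0 then show ?case using leq_refl by auto
next
  case (Suc i)
  then obtain u b where u: "u \<in> match_pow (X \<union> Y) i" and b: "b \<in> X \<union> Y"
      and m: "wmatch u b = Some w"
    by (auto simp: lang_match_def)
  have le: "leq u w" "leq b w" using wmatch_le[OF m] by auto
  from Suc.IH[OF u] show ?case
  proof
    assume "u \<in> match_pow X i"
    then show ?thesis using b m le by (auto simp: lang_match_def)
  next
    assume "\<exists>y\<in>Y. leq y u"
    then show ?thesis using le leq_trans by blast
  qed
qed

lemma unm: "unmatchable A C \<Longrightarrow> a \<in> A \<Longrightarrow> c \<in> C \<Longrightarrow> wmatch a c = Some z \<Longrightarrow> False"
  by (auto simp: unmatchable_def lang_match_def)

theorem theorem1:
  fixes B' sc' fl' B'' sc'' fl'' :: "('a::finite) tletter list set"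
  assumes "decomposed B' sc' fl'"
    and "decomposed B'' sc'' fl''"
    and "joinable B' sc' fl' B'' sc'' fl''"
  shows "\<C> B' \<union> \<C> B'' = \<C> (B' \<union> B'')"
proof
  show "\<C> B' \<union> \<C> B'' \<subseteq> \<C> (B' \<union> B'')"
    using match_pow_mono[of B' "B' \<union> B''"] match_pow_mono[of B'' "B' \<union> B''"]
    by (auto simp: compl_def match_star_def) blast+
next
  have B': "B' = sc' \<union> fl'" and B'': "B'' = sc'' \<union> fl''"
    using assms(1,2) by (auto simp: decomposed_def)
  have usc: "unmatchable (sc' \<union> sc'') (sc' \<union> sc'')"
    and ufl: "unproductive (fl' \<union> fl'')"
    and u1: "unmatchable sc' fl''" and u2: "unmatchable sc'' fl'"
    using assms(3) by (auto simp: joinable_def decomposed_def)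
  let ?fl = "fl' \<union> fl''"
  have inv: "w \<in> match_pow (B' \<union> B'') i \<Longrightarrow>
     w \<in> match_pow ?fl i \<or> (w \<in> match_pow B' i \<and> (\<exists>s\<in>sc'. leq s w))
       \<or> (w \<in> match_pow B'' i \<and> (\<exists>s\<in>sc''. leq s w))" for w i
  proof (induction i arbitrary: w)
    case 0 then show ?case using leq_refl B' B'' by auto
  next
    case (Suc i)
    then obtain u b where u: "u \<in> match_pow (B' \<union> B'') i" and b: "b \<in> B' \<union> B''"
        and m: "wmatch u b = Some w"
      by (auto simp: lang_match_def)
    have le: "leq u w" "leq b w" using wmatch_le[OF m] by auto
    have mb: "wmatch b u = Some w" using m wmatch_comm by metis
    from Suc.IH[OF u] consider (A) "u \<in> match_pow ?fl i"
      | (B) "u \<in> match_pow B' i" "\<exists>s\<in>sc'. leq s u"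
      | (C) "u \<in> match_pow B'' i" "\<exists>s\<in>sc''. leq s u" by blast
    then show ?case
    proof cases
      case A
      consider "b \<in> ?fl" | "b \<in> sc'" | "b \<in> sc''" using b B' B'' by blast
      then show ?thesis
      proof cases
        case 1 then show ?thesis using A m by (auto simp: lang_match_def)
      next
        case 2
        from split_lemma[OF A] show ?thesis
        proof
          assume "u \<in> match_pow fl' i"
          then have "u \<in> match_pow B' i" using match_pow_mono[of fl' B'] B' by auto
          then show ?thesis using 2 m le B' by (auto simp: lang_match_def)
        next
          assume "\<exists>y\<in>fl''. leq y u"
          then obtain y where y: "y \<in> fl''" "leq y u" by blast
          obtain z where "wmatch y b = Some z" using wmatch_down[OF y(2) m] by blast
          then have "wmatch b y = Some z" using wmatch_comm by metis
          then show ?thesis using unm[OF u1 2 y(1)] by blast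
        qed
      next
        case 3
        have A': "u \<in> match_pow (fl'' \<union> fl') i" using A by (simp add: Un_commute)
        from split_lemma[OF A'] show ?thesis
        proof
          assume "u \<in> match_pow fl'' i"
          then have "u \<in> match_pow B'' i" using match_pow_mono[of fl'' B''] B'' by auto
          then show ?thesis using 3 m le B'' by (auto simp: lang_match_def)
        next
          assume "\<exists>y\<in>fl'. leq y u"
          then obtain y where y: "y \<in> fl'" "leq y u" by blast
          obtain z where "wmatch y b = Some z" using wmatch_down[OF y(2) m] by blast
          then have "wmatch b y = Some z" using wmatch_comm by metis
          then show ?thesis using unm[OF u2 3 y(1)] by blast
        qed
      qed
    next
      case B
      then obtain s where s: "s \<in> sc'" "leq s u" by blast
      obtain z where z: "wmatch s b = Some z" using wmatch_down[OF s(2) m] by blast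
      consider "b \<in> fl'" | "b \<in> fl''" | "b \<in> sc' \<union> sc''" using b B' B'' by blast
      then show ?thesis
      proof cases
        case 1
        have "w \<in> match_pow B' (Suc i)" using B(1) 1 m B' by (auto simp: lang_match_def)
        moreover have "leq s w" using s(2) le(1) leq_trans by blast
        ultimately show ?thesis using s(1) by blast
      next
        case 2 then show ?thesis using unm[OF u1 s(1) 2 z] by blast
      next
        case 3 then show ?thesis using unm[OF usc _ 3 z] s(1) by blast
      qed
    next
      case C
      then obtain s where s: "s \<in> sc''" "leq s u" by blast
      obtain z where z: "wmatch s b = Some z" using wmatch_down[OF s(2) m] by blast
      consider "b \<in> fl''" | "b \<in> fl'" | "b \<in> sc' \<union> sc''" using b B' B'' by blast
      then show ?thesis
      proof cases
        case 1
        have "w \<in> match_pow B'' (Suc i)" using C(1) 1 m B'' by (auto simp: lang_match_def)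
        moreover have "leq s w" using s(2) le(1) leq_trans by blast
        ultimately show ?thesis using s(1) by blast
      next
        case 2 then show ?thesis using unm[OF u2 s(1) 2 z] by blast
      next
        case 3 then show ?thesis using unm[OF usc _ 3 z] s(1) by blast
      qed
    qed
  qed
  show "\<C> (B' \<union> B'') \<subseteq> \<C> B' \<union> \<C> B''"
  proof
    fix w assume "w \<in> \<C> (B' \<union> B'')"
    then obtain i where i: "w \<in> match_pow (B' \<union> B'') i" and p: "w \<in> plain_words"
      by (auto simp: compl_def match_star_def)
    from inv[OF i] show "w \<in> \<C> B' \<union> \<C> B''"
    proof (elim disjE)
      assume "w \<in> match_pow ?fl i"
      then have "w \<in> \<C> ?fl" using p by (auto simp: compl_def match_star_def)
      then show ?thesis using ufl by (simp add: unproductive_def)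
    qed (auto simp: compl_def match_star_def p)
  qed
qed

end
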